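(* Consider a power allocation game (PAG) as described in the context in which no country has friends ($\mathcal F_i=\emptyset$ for all $i$) and the adversary relations form a bipartite graph: there is a partition $\mathbf n=\mathcal L\cup\mathcal R$, $\mathcal L\cap\mathcal R=\emptyset$, such that whenever $j\in\mathcal A_i$, one of $i,j$ lies in $\mathcal L$ and the other in $\mathcal R$. Let $i\in\mathbf n$. If there exists a Nash equilibrium $U^*\in\mathcal U^*$ with $\sigma_i(U^* )>\tau_i(U^* )$ (country $i$ is safe), then for every $j\in\mathcal A_i$, $$p_j\ \le\ \sum_{k\in\mathcal A_j}p_k .$$
   Context: Power allocation game (PAG). There are $n$ countries labelled by $\mathbf n=\{1,\dots,n\}$; country $i$ has total power $p_i\ge 0$. Each country $i$ has a set of friends $\mathcal F_i\subseteq\mathbf n$ and a set of adversaries $\mathcal A_i\subseteq\mathbf n$; the sets $\{i\}$, $\mathcal F_i$, $\mathcal A_i$ are pairwise disjoint, and the relations are symmetric ($j\in\mathcal F_i\iff i\in\mathcal F_j$, $j\in\mathcal A_i\iff i\in\mathcal A_j$). An admissible power allocation matrix is a real $n\times n$ matrix $U=[u_{ij}]$ with $u_{ij}\ge0$, $u_{ij}=0$ whenever $j\notin\{i\}\cup\mathcal F_i\cup\mathcal A_i$, and $\sum_{j=1}^n u_{ij}=p_i$ for every $i$. Row $i$ is country $i$'s strategy: $u_{ii}$ is power kept in reserve, $u_{ij}$ ($j\in\mathcal F_i$) is support given to friend $j$, $u_{ij}$ ($j\in\mathcal A_i$) is offense against adversary $j$. $\mathcal U$ is the set of admissible matrices.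 The support of $i$ is $\sigma_i(U)=u_{ii}+\sum_{j\in\mathcal F_i}u_{ji}+\sum_{j\in\mathcal A_i}u_{ij}$ and the threat to $i$ is $\tau_i(U)=\sum_{j\in\mathcal A_i}u_{ji}$. The state $x_i(U)$ is "safe" if $\sigma_i(U)>\tau_i(U)$, "precarious" if $\sigma_i(U)=\tau_i(U)$, "unsafe" if $\sigma_i(U)<\tau_i(U)$; country $i$ survives at $U$ if it is safe or precarious. Preferences. For $U,V\in\mathcal U$, country $i$ weakly prefers $V$ to $U$ (written $U\preceq_i V$) iff (a) for all $j\in\{i\}\cup\mathcal F_i$: $x_j(V)\in\{\text{safe},\text{precarious}\}$ or $x_j(U)=\text{unsafe}$; and (b) for all $j\in\mathcal A_i$: $x_j(V)\in\{\text{unsafe},\text{precarious}\}$ or $x_j(U)=\text{safe}$. Country $i$ strictly prefers $V$ to $U$ (written $U\prec_i V$) iff either $i$ survives at $V$ and is unsafe at $U$ (priority of self-survival), or $U\preceq_i V$ holds and $V\preceq_i U$ fails. Nash equilibrium. $U^*\in\mathcal U$ is a (pure strategy) Nash equilibrium if no country has a profitable unilateral deviation: for every $i\in\mathbf n$ and every $V\in\mathcal U$ differing from $U^*$ only in row $i$, it is not the case that $U^*\prec_i V$. $\mathcal U^*$ denotes the set of Nash equilibria. *)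

theory Defs
  imports Main "HOL.Real"
begin

text \<open>Countries are 1..n. p i is the total power of i,
  F i the friends and A i the adversaries of i. Matrices are functions
  nat => nat => real, only entries with indices in 1..n matter.\<close>

definition countries :: "nat \<Rightarrow> nat set" where
  "countries n = {1..n}"

definition valid_pag :: "nat \<Rightarrow> (nat \<Rightarrow> real) \<Rightarrow> (nat \<Rightarrow> nat set) \<Rightarrow> (nat \<Rightarrow> nat set) \<Rightarrow> bool" where
  "valid_pag n p F A \<longleftrightarrow>
     (\<forall>i\<in>countries n. p i \<ge> 0 \<and> F i \<subseteq> countries n \<and> A i \<subseteq> countries n
        \<and> i \<notin> F i \<and> i \<notin> A i \<and> F i \<inter> A i = {}) \<and>
     (\<forall>i\<in>countries n. \<forall>j\<in>countries n. (j \<in> F i \<longleftrightarrow> i \<in> F j) \<and> (j \<in> A i \<longleftrightarrow> i \<in> A j))"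

definition admissible :: "nat \<Rightarrow> (nat \<Rightarrow> real) \<Rightarrow> (nat \<Rightarrow> nat set) \<Rightarrow> (nat \<Rightarrow> nat set) \<Rightarrow> (nat \<Rightarrow> nat \<Rightarrow> real) \<Rightarrow> bool" where
  "admissible n p F A U \<longleftrightarrow>
     (\<forall>i\<in>countries n. \<forall>j\<in>countries n. U i j \<ge> 0) \<and>
     (\<forall>i\<in>countries n. \<forall>j\<in>countries n. j \<notin> {i} \<union> F i \<union> A i \<longrightarrow> U i j = 0) \<and>
     (\<forall>i\<in>countries n. (\<Sum>j\<in>countries n. U i j) = p i)"

definition support :: "(nat \<Rightarrow> nat set) \<Rightarrow> (nat \<Rightarrow> nat set) \<Rightarrow> (nat \<Rightarrow> nat \<Rightarrow> real) \<Rightarrow> nat \<Rightarrow> real" where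
  "support F A U i = U i i + (\<Sum>j\<in>F i. U j i) + (\<Sum>j\<in>A i. U i j)"

definition threat :: "(nat \<Rightarrow> nat set) \<Rightarrow> (nat \<Rightarrow> nat \<Rightarrow> real) \<Rightarrow> nat \<Rightarrow> real" where
  "threat A U i = (\<Sum>j\<in>A i. U j i)"

datatype state = Safe | Precarious | Unsafe

definition state_of :: "(nat \<Rightarrow> nat set) \<Rightarrow> (nat \<Rightarrow> nat set) \<Rightarrow> (nat \<Rightarrow> nat \<Rightarrow> real) \<Rightarrow> nat \<Rightarrow> state" where
  "state_of F A U i =
     (if support F A U i > threat A U i then Safe
      else if support F A U i = threat A U i then Precarious else Unsafe)"

definition survives :: "(nat \<Rightarrow> nat set) \<Rightarrow> (nat \<Rightarrow> nat set) \<Rightarrow> (nat \<Rightarrow> nat \<Rightarrow> real) \<Rightarrow> nat \<Rightarrow> bool" where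
  "survives F A U i \<longleftrightarrow> state_of F A U i \<in> {Safe, Precarious}"

definition weak_pref :: "(nat \<Rightarrow> nat set) \<Rightarrow> (nat \<Rightarrow> nat set) \<Rightarrow> nat \<Rightarrow> (nat \<Rightarrow> nat \<Rightarrow> real) \<Rightarrow> (nat \<Rightarrow> nat \<Rightarrow> real) \<Rightarrow> bool" where
  "weak_pref F A i U V \<longleftrightarrow>
     (\<forall>j\<in>{i} \<union> F i. state_of F A V j \<in> {Safe, Precarious} \<or> state_of F A U j = Unsafe) \<and>
     (\<forall>j\<in>A i. state_of F A V j \<in> {Unsafe, Precarious} \<or> state_of F A U j = Safe)"

definition strict_pref :: "(nat \<Rightarrow> nat set) \<Rightarrow> (nat \<Rightarrow> nat set) \<Rightarrow> nat \<Rightarrow> (nat \<Rightarrow> nat \<Rightarrow> real) \<Rightarrow> (nat \<Rightarrow> nat \<Rightarrow> real) \<Rightarrow> bool" where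
  "strict_pref F A i U V \<longleftrightarrow>
     (survives F A V i \<and> state_of F A U i = Unsafe) \<or>
     (weak_pref F A i U V \<and> \<not> weak_pref F A i V U)"

definition nash_eq :: "nat \<Rightarrow> (nat \<Rightarrow> real) \<Rightarrow> (nat \<Rightarrow> nat set) \<Rightarrow> (nat \<Rightarrow> nat set) \<Rightarrow> (nat \<Rightarrow> nat \<Rightarrow> real) \<Rightarrow> bool" where
  "nash_eq n p F A U \<longleftrightarrow> admissible n p F A U \<and>
     (\<forall>i\<in>countries n. \<forall>V. admissible n p F A V \<and>
        (\<forall>k\<in>countries n. k \<noteq> i \<longrightarrow> (\<forall>j\<in>countries n. V k j = U k j))
        \<longrightarrow> \<not> strict_pref F A i U V)"

end

theory Submission
  imports Defs
begin

lemma fin_c: "finite (countries n)" by (simp add: countries_def)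

lemma supp_eq:
  assumes pag: "valid_pag n p F A" and nf: "F k = {}" and ad: "admissible n p F A U"
    and k: "k \<in> countries n"
  shows "support F A U k = p k"
proof -
  have Ak: "A k \<subseteq> countries n" "k \<notin> A k" using pag k by (auto simp: valid_pag_def)
  have "(\<Sum>j\<in>countries n. U k j) = (\<Sum>j\<in>insert k (A k). U k j)"
    apply (rule sum.mono_neutral_right)
    using fin_c Ak k ad nf by (auto simp: admissible_def)
  also have "\<dots> = U k k + (\<Sum>j\<in>A k. U k j)"
    using Ak fin_c finite_subset by (subst sum.insert) auto
  finally show ?thesis using ad k nf by (auto simp: support_def admissible_def)
qed

lemma entry_le:
  assumes ad: "admissible n p F A U" and m: "m \<in> countries n" and l: "l \<in> countries n"
  shows "U m l \<le> p m"
proof -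
  have "U m l \<le> (\<Sum>j\<in>countries n. U m j)"
    by (rule member_le_sum) (use ad m l fin_c in \<open>auto simp: admissible_def\<close>)
  thus ?thesis using ad m by (auto simp: admissible_def)
qed

theorem theorem4:
  fixes n :: nat and p :: "nat \<Rightarrow> real" and F A :: "nat \<Rightarrow> nat set"
    and L R :: "nat set" and i :: nat
  assumes pag: "valid_pag n p F A"
    and no_friends: "\<forall>k\<in>countries n. F k = {}"
    and partition: "L \<union> R = countries n" "L \<inter> R = {}"
    and bipartite: "\<forall>k\<in>countries n. \<forall>j\<in>A k. (k \<in> L \<and> j \<in> R) \<or> (k \<in> R \<and> j \<in> L)"
    and i_in: "i \<in> countries n"
    and ex_ne: "\<exists>U. nash_eq n p F A U \<and> support F A U i > threat A U i"
  shows "\<forall>j\<in>A i. p j \<le> (\<Sum>k\<in>A j. p k)"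
proof (rule ballI, rule ccontr)
  fix j assume jA: "j \<in> A i" and nle: "\<not> p j \<le> (\<Sum>k\<in>A j. p k)"
  obtain U where ne: "nash_eq n p F A U" and isafe: "support F A U i > threat A U i"
    using ex_ne by blast
  have adU: "admissible n p F A U" using ne by (simp add: nash_eq_def)
  have vp: "\<And>k. k \<in> countries n \<Longrightarrow> p k \<ge> 0 \<and> A k \<subseteq> countries n \<and> k \<notin> A k \<and> F k = {}"
    using pag no_friends by (auto simp: valid_pag_def)
  have jc: "j \<in> countries n" using vp[OF i_in] jA by auto
  have sym: "\<And>a b. a \<in> countries n \<Longrightarrow> b \<in> countries n \<Longrightarrow> (b \<in> A a \<longleftrightarrow> a \<in> A b)"
    using pag by (auto simp: valid_pag_def)
  have iAj: "i \<in> A j" using sym[OF i_in jc] jA by simp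
  have finAj: "finite (A j)" using vp[OF jc] fin_c finite_subset by blast
  define d where "d = p j - (\<Sum>k\<in>A j. p k)"
  have dpos: "d > 0" using nle by (simp add: d_def)
  define V where "V = (\<lambda>m l. if m = j then (if l \<in> A j then p l + (if l = i then d else 0) else 0) else U m l)"
  have rowj: "(\<Sum>l\<in>countries n. V j l) = p j"
  proof -
    have "(\<Sum>l\<in>countries n. V j l) = (\<Sum>l\<in>A j. V j l)"
      apply (rule sum.mono_neutral_right)
      using fin_c vp[OF jc] by (auto simp: V_def)
    also have "\<dots> = (\<Sum>l\<in>A j. p l + (if l = i then d else 0))" by (simp add: V_def)
    also have "\<dots> = (\<Sum>l\<in>A j. p l) + d"
      using finAj iAj by (simp add: sum.distrib sum.delta)
    finally show ?thesis by (simp add: d_def)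
  qed
  have adV: "admissible n p F A V"
    unfolding admissible_def
  proof (intro conjI ballI impI)
    fix a b assume a: "a \<in> countries n" and b: "b \<in> countries n"
    show "0 \<le> V a b" using adU a b vp[OF b] dpos by (auto simp: V_def admissible_def)
    { assume "b \<notin> {a} \<union> F a \<union> A a"
      thus "V a b = 0" using adU a b by (auto simp: V_def admissible_def) }
  next
    fix a assume a: "a \<in> countries n"
    show "(\<Sum>b\<in>countries n. V a b) = p a"
      using rowj adU a by (cases "a = j") (auto simp: V_def admissible_def)
  qed
  have same: "\<forall>k\<in>countries n. k \<noteq> j \<longrightarrow> (\<forall>l\<in>countries n. V k l = U k l)"
    by (simp add: V_def)
  have nostrict: "\<not> strict_pref F A j U V"
    using ne jc adV same unfolding nash_eq_def by blast
  have Vnonneg: "\<And>a b. a \<in> countries n \<Longrightarrow> b \<in> countries n \<Longrightarrow> V a b \<ge> 0"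
    using adV by (auto simp: admissible_def)
  have jsafe: "state_of F A V j = Safe"
  proof -
    have "threat A V j = (\<Sum>m\<in>A j. U m j)"
      unfolding threat_def using vp[OF jc] by (intro sum.cong) (auto simp: V_def)
    also have "\<dots> \<le> (\<Sum>m\<in>A j. p m)"
      by (rule sum_mono) (use entry_le[OF adU] jc vp[OF jc] in auto)
    also have "\<dots> < p j" using dpos by (simp add: d_def)
    finally show ?thesis using supp_eq[OF pag _ adV jc] vp[OF jc] by (simp add: state_of_def)
  qed
  have advV: "\<And>k. k \<in> A j \<Longrightarrow> threat A V k \<ge> support F A V k"
  proof -
    fix k assume kA: "k \<in> A j"
    have kc: "k \<in> countries n" using kA vp[OF jc] by auto
    have jAk: "j \<in> A k" using sym[OF jc kc] kA by simp
    have finAk: "finite (A k)" using vp[OF kc] fin_c finite_subset by blast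
    have "p k \<le> V j k" using kA dpos by (auto simp: V_def)
    also have "\<dots> \<le> threat A V k" unfolding threat_def
      by (rule member_le_sum) (use jAk finAk vp[OF kc] Vnonneg kc in auto)
    finally show "threat A V k \<ge> support F A V k" using supp_eq[OF pag _ adV kc] vp[OF kc] by simp
  qed
  have iunsafe: "state_of F A V i = Unsafe"
  proof -
    have "p i < V j i" using iAj dpos by (auto simp: V_def)
    also have "\<dots> \<le> threat A V i" unfolding threat_def
      by (rule member_le_sum) (use jA vp[OF i_in] fin_c finite_subset Vnonneg i_in in auto)
    finally show ?thesis using supp_eq[OF pag _ adV i_in] vp[OF i_in] by (simp add: state_of_def)
  qed
  have Uisafe: "state_of F A U i = Safe" using isafe by (simp add: state_of_def)
  have w1: "weak_pref F A j U V"
    unfolding weak_pref_def using jsafe vp[OF jc] advV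
    by (auto simp: state_of_def dest!: advV)
  have w2: "\<not> weak_pref F A j V U"
    unfolding weak_pref_def using iAj iunsafe Uisafe by force
  show False using nostrict w1 w2 by (simp add: strict_pref_def)
qed

end
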